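(* Let $P$ denote the law of the (discrete-time, single-type) CMJ random tree and $\hat{P}$ the law of the size-biased CMJ tree (with immortal lineage). For every fixed level $n$ and every tree $t$, $$\hat{P}([T]_n = t) = E(N_n; [T]_n = t),$$ where the Nerman martingale $$N_n = \sum_{y \in I_n} e^{-\alpha \sigma_y}$$ is the reproductive value of the coming generation at time $n$.
   Context: Setting: a single-type Crump–Mode–Jagers (general branching) process in discrete time started from one ancestor born at time $0$. The individual reproduction law is given by probabilities $p_0$ and $p_k(n_1,\dots,n_k)$, $1\le n_1\le\dots\le n_k<\infty$, $k\ge1$, where $p_k(n_1,\dots,n_k)$ is the probability of having exactly $k$ children born at ages $n_1,\dots,n_k$ of the mother; individuals reproduce independently with this common law. Individuals are labelled by finite sequences $x=(x_1,\dots,x_j)$ of positive integers (the $i$-th daughter of $x$ is $xi$), each with an i.i.d. life $\omega_x$; the bearing ages of $x$ are $\tau_i(\omega_x)$ ($=\infty$ for $i$ beyond the offspring number), and the birth time of $x=(x_1,\dots,x_j)$ is $\sigma_x = \tau_{x_1}(\omega_0)+\tau_{x_2}(\omega_{x_1})+\dots+\tau_{x_j}(\omega_{x_1\dots x_{j-1}})$. Let $m_n$ be the mean number of children born to an individual at age $n$, and let $\alpha$ be the Malthusian parameter, the solution of $\sum_{n\ge1} e^{-\alpha n} m_n = 1$. The stopped tree at level $n$ is $[T]_n = \{\omega_x, x : \sigma_x \le n\}$ (all individuals born by time $n$ together with their complete lives). The coming generation $I_n$ at time $n$ is the set of vertices of the stopped tree $[T]_n$ located above level $n$, i.e. individuals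 $y$ with $\sigma_y > n$ whose mother was born by time $n$. The size-biased measure $\hat{P}$: there is a distinguished immortal lineage starting from the ancestor. An immortal individual has $k$ children at ages $n_1,\dots,n_k$ and designates its $j$-th child as the next immortal with probability $\hat{p}_{k,j}(n_1,\dots,n_k) = 1_{\{1\le j\le k\}} e^{-\alpha n_j} p_k(n_1,\dots,n_k)$; all other (mortal) individuals reproduce independently according to the original law $p_k(n_1,\dots,n_k)$. $\hat{P}([T]_n=t)$ is the marginal law of the (unlabelled-lineage) stopped tree under this measure. *)

theory Defs
  imports "HOL-Probability.Probability"
begin

text \<open>A life is the (finite, sorted) list of bearing ages [n_1,...,n_k] of its children.
  Individuals are labelled by lists of positive integers; the i-th daughter of x is x @ [i].\<close>

type_synonym life = "nat list"
type_synonym label = "nat list"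

definition tau :: "life \<Rightarrow> nat \<Rightarrow> enat" where
  "tau l i = (if 1 \<le> i \<and> i \<le> length l then enat (l ! (i - 1)) else \<infinity>)"

fun birth_from :: "(label \<Rightarrow> life) \<Rightarrow> label \<Rightarrow> label \<Rightarrow> enat" where
  "birth_from \<omega> pre [] = 0"
| "birth_from \<omega> pre (i # rest) = tau (\<omega> pre) i + birth_from \<omega> (pre @ [i]) rest"

definition sigma :: "(label \<Rightarrow> life) \<Rightarrow> label \<Rightarrow> enat" where
  "sigma \<omega> x = birth_from \<omega> [] x"

definition stopped :: "(label \<Rightarrow> life) \<Rightarrow> nat \<Rightarrow> (label \<Rightarrow> life option)" where
  "stopped \<omega> n = (\<lambda>x. if sigma \<omega> x \<le> enat n then Some (\<omega> x) else None)"

definition coming_gen :: "(label \<Rightarrow> life) \<Rightarrow> nat \<Rightarrow> label set" where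
  "coming_gen \<omega> n = {y. y \<noteq> [] \<and> sigma \<omega> y \<noteq> \<infinity> \<and> enat n < sigma \<omega> y
                        \<and> sigma \<omega> (butlast y) \<le> enat n}"

definition nerman :: "real \<Rightarrow> (label \<Rightarrow> life) \<Rightarrow> nat \<Rightarrow> real" where
  "nerman \<alpha> \<omega> n = (\<Sum>y\<in>coming_gen \<omega> n. exp (- \<alpha> * real (the_enat (sigma \<omega> y))))"

definition mean_births :: "life pmf \<Rightarrow> nat \<Rightarrow> ennreal" where
  "mean_births p n = (\<integral>\<^sup>+ l. ennreal (real (count_list l n)) \<partial>measure_pmf p)"

definition cmj_law :: "life pmf \<Rightarrow> (label \<Rightarrow> life) measure" where
  "cmj_law p = PiM UNIV (\<lambda>_::label. measure_pmf p)"

text \<open>Joint law of (life, designated child j) of an immortal individual: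
  hat p_{k,j}(n_1..n_k) = 1{1<=j<=k} e^{-alpha n_j} p_k(n_1..n_k).\<close>
definition hat_law :: "life pmf \<Rightarrow> real \<Rightarrow> (life \<times> nat) measure" where
  "hat_law p \<alpha> = density (count_space UNIV)
     (\<lambda>(l, j). ennreal (if 1 \<le> j \<and> j \<le> length l
                         then exp (- \<alpha> * real (l ! (j - 1))) * pmf p l else 0))"

text \<open>Label of the immortal individual at depth k, given the spine data S
  (S k = (life of the immortal at depth k, index of its immortal child)).\<close>
definition spine :: "(nat \<Rightarrow> life \<times> nat) \<Rightarrow> nat \<Rightarrow> label" where
  "spine S k = map (\<lambda>i. snd (S i)) [0..<k]"

definition sb_lives :: "(nat \<Rightarrow> life \<times> nat) \<Rightarrow> (label \<Rightarrow> life) \<Rightarrow> (label \<Rightarrow> life)" where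
  "sb_lives S \<omega>' = (\<lambda>x. if x = spine S (length x) then fst (S (length x)) else \<omega>' x)"

definition sb_law :: "life pmf \<Rightarrow> real \<Rightarrow> ((nat \<Rightarrow> life \<times> nat) \<times> (label \<Rightarrow> life)) measure" where
  "sb_law p \<alpha> = PiM UNIV (\<lambda>_::nat. hat_law p \<alpha>) \<Otimes>\<^sub>M cmj_law p"

end

theory Submission
  imports Defs
begin

lemma birth_from_snoc:
  "birth_from \<omega> pre (xs @ [i]) = birth_from \<omega> pre xs + tau (\<omega> (pre @ xs)) i"
  by (induction xs arbitrary: pre) (simp_all add: add.assoc)

lemma sigma_snoc: "sigma \<omega> (x @ [i]) = sigma \<omega> x + tau (\<omega> x) i"
  unfolding sigma_def by (simp add: birth_from_snoc)

lemma sigma_Nil[simp]: "sigma \<omega> [] = 0"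
  by (simp add: sigma_def)

lemma sigma_mono: "sigma \<omega> x \<le> sigma \<omega> (x @ ys)"
proof (induction ys rule: rev_induct)
  case Nil then show ?case by simp
next
  case (snoc y ys)
  have "sigma \<omega> (x @ ys) \<le> sigma \<omega> (x @ ys @ [y])"
    using sigma_snoc[of \<omega> "x @ ys" y] by simp
  with snoc show ?case by (metis append_assoc order_trans)
qed

lemma sigma_take_le: "sigma \<omega> (take k x) \<le> sigma \<omega> x"
  using sigma_mono[of \<omega> "take k x" "drop k x"] by simp

lemma sigma_butlast_le: "sigma \<omega> (butlast x) \<le> sigma \<omega> x"
  using sigma_take_le[of \<omega> "length x - 1" x] by (simp add: butlast_conv_take)

text \<open>Key lemma: the event stopped = t is a cylinder.\<close>
lemma stopped_agree:
  assumes agree: "\<And>x. sigma \<omega>0 x \<le> enat n \<Longrightarrow> \<omega> x = \<omega>0 x"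
  shows "(sigma \<omega> x \<le> enat n \<longleftrightarrow> sigma \<omega>0 x \<le> enat n) \<and>
         (sigma \<omega>0 x \<le> enat n \<longrightarrow> sigma \<omega> x = sigma \<omega>0 x)"
proof (induction x rule: rev_induct)
  case Nil then show ?case by simp
next
  case (snoc i z)
  show ?case
  proof (cases "sigma \<omega>0 z \<le> enat n")
    case True
    then have "sigma \<omega> (z @ [i]) = sigma \<omega>0 (z @ [i])"
      using snoc agree[OF True] by (simp add: sigma_snoc)
    then show ?thesis by simp
  next
    case False
    then have "\<not> sigma \<omega> z \<le> enat n" using snoc by simp
    then have a: "\<not> sigma \<omega> (z@[i]) \<le> enat n" using sigma_mono[of \<omega> z "[i]"] by auto
    have "\<not> sigma \<omega>0 (z@[i]) \<le> enat n" using False sigma_mono[of \<omega>0 z "[i]"] by auto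
    with a show ?thesis by simp
  qed
qed

lemma stopped_iff:
  "stopped \<omega> n = stopped \<omega>0 n \<longleftrightarrow> (\<forall>x. sigma \<omega>0 x \<le> enat n \<longrightarrow> \<omega> x = \<omega>0 x)"
proof
  assume h: "stopped \<omega> n = stopped \<omega>0 n"
  show "\<forall>x. sigma \<omega>0 x \<le> enat n \<longrightarrow> \<omega> x = \<omega>0 x"
  proof (intro allI impI)
    fix x assume "sigma \<omega>0 x \<le> enat n"
    then show "\<omega> x = \<omega>0 x" using fun_cong[OF h, of x]
      by (auto simp: stopped_def split: if_splits)
  qed
next
  assume h: "\<forall>x. sigma \<omega>0 x \<le> enat n \<longrightarrow> \<omega> x = \<omega>0 x"
  show "stopped \<omega> n = stopped \<omega>0 n"
    unfolding stopped_def using stopped_agree[of \<omega>0 n \<omega>] h by fastforce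
qed

lemma sigma_formula:
  "sigma \<omega> y = (if \<forall>k<length y. 1 \<le> y!k \<and> y!k \<le> length (\<omega> (take k y))
     then enat (\<Sum>k<length y. \<omega> (take k y) ! (y!k - 1)) else \<infinity>)"
proof (induction y rule: rev_induct)
  case Nil then show ?case by (simp add: zero_enat_def)
next
  case (snoc i y)
  have eq1: "\<And>k. k < length y \<Longrightarrow> (y@[i])!k = y!k \<and> take k (y@[i]) = take k y"
    by (simp add: nth_append)
  have c: "(\<forall>k<length (y@[i]). 1 \<le> (y@[i])!k \<and> (y@[i])!k \<le> length (\<omega> (take k (y@[i]))))
     \<longleftrightarrow> (\<forall>k<length y. 1 \<le> y!k \<and> y!k \<le> length (\<omega> (take k y))) \<and> 1 \<le> i \<and> i \<le> length (\<omega> y)"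
    using eq1 by (auto simp: less_Suc_eq nth_append)
  have s: "(\<Sum>k<length (y@[i]). \<omega> (take k (y@[i])) ! ((y@[i])!k - 1))
      = (\<Sum>k<length y. \<omega> (take k y) ! (y!k - 1)) + \<omega> y ! (i - 1)"
    using eq1 by (simp add: lessThan_Suc)
  show ?case
    unfolding sigma_snoc snoc c s
    by (cases "\<forall>k<length y. 1 \<le> y!k \<and> y!k \<le> length (\<omega> (take k y))"; cases "1 \<le> i \<and> i \<le> length (\<omega> y)")
       (simp_all add: tau_def)
qed

lemma suminf_count_list:
  assumes "\<forall>a\<in>set l. 1 \<le> a"
  shows "(\<Sum>k. ennreal (exp (- \<alpha> * real (Suc k))) * ennreal (real (count_list l (Suc k))))
       = ennreal (\<Sum>a\<leftarrow>l. exp (- \<alpha> * real a))"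
  using assms
proof (induction l)
  case Nil then show ?case by simp
next
  case (Cons a l)
  have split: "\<And>k. ennreal (exp (- \<alpha> * real (Suc k))) * ennreal (real (count_list (a#l) (Suc k)))
     = (if k = a - 1 then ennreal (exp (- \<alpha> * real (Suc k))) else 0)
       + ennreal (exp (- \<alpha> * real (Suc k))) * ennreal (real (count_list l (Suc k)))"
    using Cons.prems by (auto simp: distrib_left ennreal_plus[symmetric])
  have s1: "(\<Sum>k. (if k = a - 1 then ennreal (exp (- \<alpha> * real (Suc k))) else 0)) = ennreal (exp (- \<alpha> * real a))"
    using sums_unique[OF sums_single[of "a - 1" "\<lambda>k. ennreal (exp (- \<alpha> * real (Suc k)))"]] Cons.prems
    by (simp add: Suc_diff_1)
  have nn: "0 \<le> (\<Sum>a\<leftarrow>l. exp (- \<alpha> * real a))" by (rule sum_list_nonneg) auto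
  have "(\<Sum>k. ennreal (exp (- \<alpha> * real (Suc k))) * ennreal (real (count_list (a#l) (Suc k))))
     = ennreal (exp (- \<alpha> * real a)) + ennreal (\<Sum>a\<leftarrow>l. exp (- \<alpha> * real a))"
    unfolding split
    by (subst suminf_add[symmetric]) (use Cons s1 in auto)
  also have "\<dots> = ennreal (\<Sum>a\<leftarrow>a#l. exp (- \<alpha> * real a))"
    using nn by (simp add: ennreal_plus)
  finally show ?case .
qed

lemma sum_nth_list: "(\<Sum>j\<in>{1..length l}. f (l ! (j - 1))) = (\<Sum>a\<leftarrow>l. f a)"
proof -
  have "(\<Sum>j\<in>{1..length l}. f (l ! (j - 1))) = (\<Sum>i<length l. f (l ! i))"
    by (rule sum.reindex_bij_witness[of _ Suc "\<lambda>j. j - 1"]) auto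
  also have "\<dots> = (\<Sum>a\<leftarrow>l. f a)"
    by (simp add: sum_list_sum_nth atLeast0LessThan)
  finally show ?thesis .
qed

lemma hat_inner:
  "(\<integral>\<^sup>+ j. ennreal (if 1 \<le> j \<and> j \<le> length l then exp (- \<alpha> * real (l ! (j - 1))) * pmf p l else 0) \<partial>count_space UNIV)
   = ennreal (pmf p l) * ennreal (\<Sum>a\<leftarrow>l. exp (- \<alpha> * real a))"
proof -
  have "(\<integral>\<^sup>+ j. ennreal (if 1 \<le> j \<and> j \<le> length l then exp (- \<alpha> * real (l ! (j - 1))) * pmf p l else 0) \<partial>count_space UNIV)
     = (\<integral>\<^sup>+ j. ennreal (exp (- \<alpha> * real (l ! (j - 1))) * pmf p l) * indicator {1..length l} j \<partial>count_space UNIV)"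
    by (intro nn_integral_cong) (auto simp: indicator_def)
  also have "\<dots> = (\<Sum>j\<in>{1..length l}. ennreal (exp (- \<alpha> * real (l ! (j - 1))) * pmf p l))"
    by (subst nn_integral_indicator_finite) auto
  also have "\<dots> = ennreal (\<Sum>j\<in>{1..length l}. exp (- \<alpha> * real (l ! (j - 1))) * pmf p l)"
    by (rule sum_ennreal) auto
  also have "(\<Sum>j\<in>{1..length l}. exp (- \<alpha> * real (l ! (j - 1))) * pmf p l)
      = pmf p l * (\<Sum>a\<leftarrow>l. exp (- \<alpha> * real a))"
  proof -
    have e: "(\<Sum>j\<in>{1..length l}. exp (- \<alpha> * real (l ! (j - 1)))) = (\<Sum>a\<leftarrow>l. exp (- \<alpha> * real a))"
      by (rule sum_nth_list)
    show ?thesis using e by (simp add: sum_distrib_left[symmetric] mult.commute)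
  qed
  moreover have "0 \<le> (\<Sum>a\<leftarrow>l. exp (- \<alpha> * real a))" by (rule sum_list_nonneg) auto
  ultimately show ?thesis by (simp add: ennreal_mult)
qed

lemma prob_space_hat:
  assumes lives: "\<And>l. l \<in> set_pmf p \<Longrightarrow> sorted l \<and> (\<forall>a\<in>set l. 1 \<le> a)"
    and malthus: "(\<Sum>k. ennreal (exp (- \<alpha> * real (Suc k))) * mean_births p (Suc k)) = 1"
  shows "prob_space (hat_law p \<alpha>)"
proof
  define f where "f = (\<lambda>(l::life, j::nat). ennreal (if 1 \<le> j \<and> j \<le> length l
                         then exp (- \<alpha> * real (l ! (j - 1))) * pmf p l else 0))"
  have "emeasure (hat_law p \<alpha>) (space (hat_law p \<alpha>)) = (\<integral>\<^sup>+ x. f x \<partial>count_space UNIV)"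
    unfolding hat_law_def f_def by (simp add: emeasure_density)
  also have "\<dots> = (\<integral>\<^sup>+ x. f x \<partial>(count_space UNIV \<Otimes>\<^sub>M count_space UNIV))"
    by (simp add: pair_measure_countable)
  also have "\<dots> = (\<integral>\<^sup>+ l. \<integral>\<^sup>+ j. f (l, j) \<partial>count_space UNIV \<partial>count_space UNIV)"
    by (rule sigma_finite_measure.nn_integral_fst[symmetric])
       (auto intro: sigma_finite_measure_count_space_countable simp: pair_measure_countable)
  also have "\<dots> = (\<integral>\<^sup>+ l. ennreal (pmf p l) * ennreal (\<Sum>a\<leftarrow>l. exp (- \<alpha> * real a)) \<partial>count_space UNIV)"
    by (simp only: f_def prod.case hat_inner)
  also have "\<dots> = (\<integral>\<^sup>+ l. ennreal (\<Sum>a\<leftarrow>l. exp (- \<alpha> * real a)) \<partial>measure_pmf p)"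
    by (simp add: nn_integral_measure_pmf)
  also have "\<dots> = (\<integral>\<^sup>+ l. (\<Sum>k. ennreal (exp (- \<alpha> * real (Suc k))) * ennreal (real (count_list l (Suc k)))) \<partial>measure_pmf p)"
    by (intro nn_integral_cong_AE AE_pmfI, rule suminf_count_list[symmetric]) (use lives in auto)
  also have "\<dots> = (\<Sum>k. \<integral>\<^sup>+ l. ennreal (exp (- \<alpha> * real (Suc k))) * ennreal (real (count_list l (Suc k))) \<partial>measure_pmf p)"
    by (rule nn_integral_suminf) simp
  also have "\<dots> = (\<Sum>k. ennreal (exp (- \<alpha> * real (Suc k))) * mean_births p (Suc k))"
    unfolding mean_births_def by (simp add: nn_integral_cmult)
  finally show "emeasure (hat_law p \<alpha>) (space (hat_law p \<alpha>)) = 1" using malthus by simp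
qed

lemma prod_emb_UNIV:
  assumes "\<And>i. space (M i) = UNIV"
  shows "prod_emb UNIV M J (Pi\<^sub>E J A) = {\<omega>. \<forall>j\<in>J. \<omega> j \<in> A j}"
  using assms by (auto simp: prod_emb_def PiE_iff)

lemma length_spine[simp]: "length (spine S k) = k"
  by (simp add: spine_def)

lemma spine_Suc: "spine S (Suc k) = spine S k @ [snd (S k)]"
  by (simp add: spine_def)

lemma spine_0[simp]: "spine S 0 = []"
  by (simp add: spine_def)

lemma take_spine: "k \<le> m \<Longrightarrow> take k (spine S m) = spine S k"
  by (simp add: spine_def take_map min_def)

lemma nth_spine: "i < k \<Longrightarrow> spine S k ! i = snd (S i)"
  by (simp add: spine_def)

lemma spine_eq_take:
  assumes "\<forall>i<length y. snd (S i) = y ! i" "k \<le> length y"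
  shows "spine S k = take k y"
  using assms by (intro nth_equalityI) (auto simp: nth_spine)

lemma take_in_D:
  "sigma \<omega> x \<le> enat n \<Longrightarrow> sigma \<omega> (take k x) \<le> enat n"
  using sigma_take_le[of \<omega> k x] by (rule order_trans)

primrec Tl :: "(label \<Rightarrow> life) \<Rightarrow> nat \<Rightarrow> label set" where
  "Tl \<omega> 0 = {[]}"
| "Tl \<omega> (Suc k) = (\<Union>z\<in>Tl \<omega> k. (\<lambda>i. z @ [i]) ` {1..length (\<omega> z)})"

lemma finite_Tl: "finite (Tl \<omega> k)"
  by (induction k) auto

lemma D_struct:
  assumes pos: "\<And>x. sigma \<omega> x \<le> enat n \<Longrightarrow> \<forall>a\<in>set (\<omega> x). 1 \<le> a"
  shows "sigma \<omega> x \<le> enat n \<longrightarrow> enat (length x) \<le> sigma \<omega> x \<and> x \<in> Tl \<omega> (length x)"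
proof (induction x rule: rev_induct)
  case Nil then show ?case by (simp add: zero_enat_def)
next
  case (snoc i z)
  show ?case
  proof
    assume h: "sigma \<omega> (z @ [i]) \<le> enat n"
    then have zD: "sigma \<omega> z \<le> enat n" using sigma_mono[of \<omega> z "[i]"] by auto
    with snoc have ih: "enat (length z) \<le> sigma \<omega> z" "z \<in> Tl \<omega> (length z)" by auto
    have "tau (\<omega> z) i \<noteq> \<infinity>" using h by (cases "tau (\<omega> z) i") (auto simp: sigma_snoc)
    then have rng: "1 \<le> i" "i \<le> length (\<omega> z)" and tv: "tau (\<omega> z) i = enat (\<omega> z ! (i - 1))"
      by (auto simp: tau_def split: if_splits)
    have "\<omega> z ! (i - 1) \<in> set (\<omega> z)" using rng by auto
    then have "1 \<le> \<omega> z ! (i - 1)" using pos[OF zD] by auto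
    then have "enat (Suc (length z)) \<le> sigma \<omega> z + tau (\<omega> z) i"
      using ih(1) tv by (metis add_mono eSuc_enat one_enat_def plus_1_eSuc(2) enat_ord_simps(1))
    then show "enat (length (z @ [i])) \<le> sigma \<omega> (z @ [i]) \<and> z @ [i] \<in> Tl \<omega> (length (z @ [i]))"
      using ih(2) rng by (auto simp: sigma_snoc intro!: bexI[of _ z])
  qed
qed

lemma finite_D:
  assumes pos: "\<And>x. sigma \<omega> x \<le> enat n \<Longrightarrow> \<forall>a\<in>set (\<omega> x). 1 \<le> a"
  shows "finite {x. sigma \<omega> x \<le> enat n}"
proof (rule finite_subset)
  show "{x. sigma \<omega> x \<le> enat n} \<subseteq> (\<Union>k\<le>n. Tl \<omega> k)"
  proof
    fix x assume "x \<in> {x. sigma \<omega> x \<le> enat n}"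
    then have h: "sigma \<omega> x \<le> enat n" by simp
    have "enat (length x) \<le> sigma \<omega> x \<and> x \<in> Tl \<omega> (length x)"
      using D_struct[of \<omega> n x] pos h by blast
    then have "enat (length x) \<le> sigma \<omega> x" "x \<in> Tl \<omega> (length x)" by auto
    then have "length x \<le> n" using h by (meson enat_ord_simps(1) order_trans)
    with \<open>x \<in> Tl \<omega> (length x)\<close> show "x \<in> (\<Union>k\<le>n. Tl \<omega> k)" by auto
  qed
qed (simp add: finite_Tl)

definition Dset :: "(label \<Rightarrow> life) \<Rightarrow> nat \<Rightarrow> label set" where
  "Dset \<omega>0 n = {x. sigma \<omega>0 x \<le> enat n}"
definition Yset :: "(label \<Rightarrow> life) \<Rightarrow> nat \<Rightarrow> label set" where
  "Yset \<omega>0 n = {y. y \<noteq> [] \<and> butlast y \<in> Dset \<omega>0 n \<and> y \<notin> Dset \<omega>0 n}"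
definition Aset :: "(label \<Rightarrow> life) \<Rightarrow> label \<Rightarrow> (nat \<Rightarrow> life \<times> nat) set" where
  "Aset \<omega>0 y = {S. \<forall>k<length y. S k = (\<omega>0 (take k y), y!k)}"
definition Pset :: "label \<Rightarrow> label set" where
  "Pset y = (\<lambda>k. take k y) ` {..<length y}"
definition Bset :: "(label \<Rightarrow> life) \<Rightarrow> nat \<Rightarrow> label \<Rightarrow> (label \<Rightarrow> life) set" where
  "Bset \<omega>0 n y = {\<omega>'. \<forall>x\<in>Dset \<omega>0 n - Pset y. \<omega>' x = \<omega>0 x}"

lemma D_take: "x \<in> Dset \<omega>0 n \<Longrightarrow> take k x \<in> Dset \<omega>0 n"
  unfolding Dset_def using take_in_D by auto

lemma D_Nil: "[] \<in> Dset \<omega>0 n"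
  by (simp add: Dset_def zero_enat_def)

lemma Y_prefix: "y \<in> Yset \<omega>0 n \<Longrightarrow> k < length y \<Longrightarrow> take k y \<in> Dset \<omega>0 n"
proof -
  assume y: "y \<in> Yset \<omega>0 n" and k: "k < length y"
  then have "take k (butlast y) \<in> Dset \<omega>0 n" by (intro D_take) (auto simp: Yset_def)
  moreover have "take k (butlast y) = take k y" using k by (auto simp: butlast_conv_take min_def)
  ultimately show ?thesis by simp
qed

lemma spine_of_A:
  assumes "S \<in> Aset \<omega>0 y" "k \<le> length y"
  shows "spine S k = take k y"
  using assms by (intro spine_eq_take) (auto simp: Aset_def)

lemma decomp:
  assumes fin: "finite (Dset \<omega>0 n)"
  shows "{(S, \<omega>'). \<forall>x\<in>Dset \<omega>0 n. sb_lives S \<omega>' x = \<omega>0 x}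
       = (\<Union>y\<in>Yset \<omega>0 n. Aset \<omega>0 y \<times> Bset \<omega>0 n y)"
proof (intro equalityI subsetI)
  fix z assume "z \<in> {(S, \<omega>'). \<forall>x\<in>Dset \<omega>0 n. sb_lives S \<omega>' x = \<omega>0 x}"
  then obtain S \<omega>' where z: "z = (S, \<omega>')" and h: "\<forall>x\<in>Dset \<omega>0 n. sb_lives S \<omega>' x = \<omega>0 x" by auto
  define D where "D = Dset \<omega>0 n"
  define M where "M = Suc (Max (length ` D))"
  have "spine S M \<notin> D"
  proof
    assume "spine S M \<in> D"
    then have "length (spine S M) \<in> length ` D" by (rule imageI)
    then have "length (spine S M) \<le> Max (length ` D)" using fin by (intro Max_ge) (auto simp: D_def)
    then show False by (simp add: M_def)
  qed
  then have ex: "\<exists>k. spine S k \<notin> D" by blast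
  define k0 where "k0 = (LEAST k. spine S k \<notin> D)"
  have k0: "spine S k0 \<notin> D" unfolding k0_def by (rule LeastI_ex[OF ex])
  have lt: "\<And>k. k < k0 \<Longrightarrow> spine S k \<in> D" unfolding k0_def using not_less_Least by blast
  have "k0 \<noteq> 0"
  proof
    assume "k0 = 0" then show False using k0 D_Nil[of \<omega>0 n] by (simp add: D_def)
  qed
  define y where "y = spine S k0"
  have ly: "length y = k0" by (simp add: y_def)
  have tk: "\<And>k. k \<le> k0 \<Longrightarrow> take k y = spine S k" by (simp add: y_def take_spine)
  have "butlast y = spine S (k0 - 1)" using tk[of "k0 - 1"] ly by (simp add: butlast_conv_take)
  then have yY: "y \<in> Yset \<omega>0 n" using \<open>k0 \<noteq> 0\<close> lt[of "k0 - 1"] k0 ly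
    by (auto simp: Yset_def D_def y_def)
  have spl: "\<And>k. sb_lives S \<omega>' (spine S k) = fst (S k)" by (simp add: sb_lives_def)
  have "S \<in> Aset \<omega>0 y"
    unfolding Aset_def
  proof (intro CollectI allI impI)
    fix k assume "k < length y"
    then have "k < k0" using ly by simp
    then have "fst (S k) = \<omega>0 (spine S k)" using h lt[of k] spl[of k] by (auto simp: D_def)
    moreover have "y ! k = snd (S k)" using \<open>k < k0\<close> by (simp add: y_def nth_spine)
    ultimately show "S k = (\<omega>0 (take k y), y ! k)" using tk[of k] \<open>k < k0\<close> by (simp add: prod_eq_iff)
  qed
  moreover have "\<omega>' \<in> Bset \<omega>0 n y"
    unfolding Bset_def
  proof (intro CollectI ballI)
    fix x assume x: "x \<in> Dset \<omega>0 n - Pset y"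
    have "x \<noteq> spine S (length x)"
    proof
      assume xs0: "x = spine S (length x)"
      note xs = xs0[symmetric]
      show False
      proof (cases "length x < k0")
        case True
        then have "x = take (length x) y" using tk[of "length x"] xs by simp
        then have "x \<in> Pset y" using True ly by (auto simp: Pset_def)
        then show False using x by simp
      next
        case False
        then have "take k0 x = y" using xs take_spine[of k0 "length x" S] by (simp add: y_def)
        then have "y \<in> D" using x D_take[of x \<omega>0 n k0] by (auto simp: D_def)
        then show False using k0 by (simp add: y_def)
      qed
    qed
    then show "\<omega>' x = \<omega>0 x" using h x by (auto simp: sb_lives_def)
  qed
  ultimately show "z \<in> (\<Union>y\<in>Yset \<omega>0 n. Aset \<omega>0 y \<times> Bset \<omega>0 n y)" using yY z by auto
next
  fix z assume "z \<in> (\<Union>y\<in>Yset \<omega>0 n. Aset \<omega>0 y \<times> Bset \<omega>0 n y)"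
  then obtain y S \<omega>' where z: "z = (S, \<omega>')" and yY: "y \<in> Yset \<omega>0 n"
    and A: "S \<in> Aset \<omega>0 y" and B: "\<omega>' \<in> Bset \<omega>0 n y" by auto
  have "\<forall>x\<in>Dset \<omega>0 n. sb_lives S \<omega>' x = \<omega>0 x"
  proof
    fix x assume xD: "x \<in> Dset \<omega>0 n"
    show "sb_lives S \<omega>' x = \<omega>0 x"
    proof (cases "x \<in> Pset y")
      case True
      then obtain k where k: "k < length y" "x = take k y" by (auto simp: Pset_def)
      then have "spine S (length x) = x" using spine_of_A[OF A, of k] by simp
      moreover have "S k = (\<omega>0 (take k y), y!k)" using A k by (simp add: Aset_def)
      ultimately show ?thesis using k by (simp add: sb_lives_def)
    next
      case False
      have "x \<noteq> spine S (length x)"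
      proof
        assume xs0: "x = spine S (length x)"
      note xs = xs0[symmetric]
        show False
        proof (cases "length x < length y")
          case True
          then have "x = take (length x) y" using spine_of_A[OF A, of "length x"] xs by simp
          then have "x \<in> Pset y" using True by (auto simp: Pset_def)
          then show False using False by simp
        next
          case c: False
          then have "take (length y) x = y"
            using xs take_spine[of "length y" "length x" S] spine_of_A[OF A, of "length y"] by simp
          then have "y \<in> Dset \<omega>0 n" using D_take[OF xD, of "length y"] by simp
          then show False using yY by (simp add: Yset_def)
        qed
      qed
      then show ?thesis using B xD False by (auto simp: sb_lives_def Bset_def)
    qed
  qed
  then show "z \<in> {(S, \<omega>'). \<forall>x\<in>Dset \<omega>0 n. sb_lives S \<omega>' x = \<omega>0 x}" using z by simp
qed

lemma decomp_disj: "disjoint_family_on (\<lambda>y. Aset \<omega>0 y \<times> Bset \<omega>0 n y) (Yset \<omega>0 n)"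
proof -
  have key: "False" if y1: "y1 \<in> Yset \<omega>0 n" and y2: "y2 \<in> Yset \<omega>0 n" and l: "length y1 < length y2"
    and S1: "S \<in> Aset \<omega>0 y1" and S2: "S \<in> Aset \<omega>0 y2" for y1 y2 S
  proof -
    have e1: "spine S (length y1) = y1" using spine_of_A[OF S1, of "length y1"] by simp
    have e2: "spine S (length y1) = take (length y1) y2" using spine_of_A[OF S2, of "length y1"] l by simp
    have "y1 = take (length y1) y2" using e1 e2 by simp
    then have "y1 \<in> Dset \<omega>0 n" using Y_prefix[OF y2 l] by simp
    then show False using y1 by (simp add: Yset_def)
  qed
  show ?thesis unfolding disjoint_family_on_def
  proof (intro ballI impI)
    fix y1 y2 assume y1: "y1 \<in> Yset \<omega>0 n" and y2: "y2 \<in> Yset \<omega>0 n" and ne: "y1 \<noteq> y2"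
    show "Aset \<omega>0 y1 \<times> Bset \<omega>0 n y1 \<inter> Aset \<omega>0 y2 \<times> Bset \<omega>0 n y2 = {}"
    proof (rule ccontr)
      assume "Aset \<omega>0 y1 \<times> Bset \<omega>0 n y1 \<inter> Aset \<omega>0 y2 \<times> Bset \<omega>0 n y2 \<noteq> {}"
      then obtain S where S1: "S \<in> Aset \<omega>0 y1" and S2: "S \<in> Aset \<omega>0 y2" by auto
      consider "length y1 < length y2" | "length y2 < length y1" | "length y1 = length y2" by linarith
      then show False
      proof cases
        case 1 then show ?thesis using key[OF y1 y2 _ S1 S2] by simp
      next
        case 2 then show ?thesis using key[OF y2 y1 _ S2 S1] by simp
      next
        case 3
        have e1: "spine S (length y1) = y1" using spine_of_A[OF S1, of "length y1"] by simp
        have e2: "spine S (length y2) = y2" using spine_of_A[OF S2, of "length y2"] by simp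
        have "y1 = y2" using e1 e2 3 by metis
        then show ?thesis using ne by simp
      qed
    qed
  qed
qed

definition hv :: "life pmf \<Rightarrow> real \<Rightarrow> life \<Rightarrow> nat \<Rightarrow> real" where
  "hv p \<alpha> L j = (if 1 \<le> j \<and> j \<le> length L then exp (- \<alpha> * real (L ! (j - 1))) * pmf p L else 0)"

lemma hv_nonneg: "0 \<le> hv p \<alpha> L j"
  by (simp add: hv_def)

lemma sets_hat[simp]: "sets (hat_law p \<alpha>) = UNIV"
  by (simp add: hat_law_def)

lemma space_hat[simp]: "space (hat_law p \<alpha>) = UNIV"
  by (simp add: hat_law_def)

lemma emeasure_hat_set:
  "emeasure (hat_law p \<alpha>) A = (\<integral>\<^sup>+ x. ennreal (hv p \<alpha> (fst x) (snd x)) * indicator A x \<partial>count_space UNIV)"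
  unfolding hat_law_def
  by (subst emeasure_density) (auto simp: hv_def case_prod_beta intro!: nn_integral_cong)

lemma hat_single: "emeasure (hat_law p \<alpha>) {(L, j)} = ennreal (hv p \<alpha> L j)"
  unfolding emeasure_hat_set by (subst nn_integral_indicator_singleton) auto

lemma hat_null:
  assumes "pmf p L = 0"
  shows "emeasure (hat_law p \<alpha>) ({L} \<times> UNIV) = 0"
  unfolding emeasure_hat_set using assms
  by (subst nn_integral_0_iff_AE) (auto simp: hv_def indicator_def)

lemma space_PiM_UNIV:
  assumes "\<And>i. space (M i) = UNIV"
  shows "space (PiM UNIV M) = UNIV"
  using assms by (auto simp: space_PiM PiE_def)

lemma nerman_eq:
  assumes agree: "\<And>x. sigma \<omega>0 x \<le> enat n \<Longrightarrow> \<omega> x = \<omega>0 x"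
  shows "nerman \<alpha> \<omega> n = nerman \<alpha> \<omega>0 n"
proof -
  note sa = stopped_agree[of \<omega>0 n \<omega>, OF agree]
  have sy: "sigma \<omega> y = sigma \<omega>0 y" if "y \<noteq> []" "sigma \<omega>0 (butlast y) \<le> enat n" for y
  proof -
    have y: "y = butlast y @ [last y]" using that by simp
    have "sigma \<omega> (butlast y @ [last y]) = sigma \<omega>0 (butlast y @ [last y])"
      unfolding sigma_snoc using sa[of "butlast y"] agree[OF that(2)] that(2) by simp
    then show ?thesis using y by metis
  qed
  have cg: "coming_gen \<omega> n = coming_gen \<omega>0 n"
    unfolding coming_gen_def
  proof (intro Collect_cong iffI)
    fix y assume h: "y \<noteq> [] \<and> sigma \<omega> y \<noteq> \<infinity> \<and> enat n < sigma \<omega> y \<and> sigma \<omega> (butlast y) \<le> enat n"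
    then have "sigma \<omega>0 (butlast y) \<le> enat n" using sa[of "butlast y"] by simp
    then show "y \<noteq> [] \<and> sigma \<omega>0 y \<noteq> \<infinity> \<and> enat n < sigma \<omega>0 y \<and> sigma \<omega>0 (butlast y) \<le> enat n"
      using h sy[of y] by simp
  next
    fix y assume h: "y \<noteq> [] \<and> sigma \<omega>0 y \<noteq> \<infinity> \<and> enat n < sigma \<omega>0 y \<and> sigma \<omega>0 (butlast y) \<le> enat n"
    then have "sigma \<omega> (butlast y) \<le> enat n" using sa[of "butlast y"] by simp
    then show "y \<noteq> [] \<and> sigma \<omega> y \<noteq> \<infinity> \<and> enat n < sigma \<omega> y \<and> sigma \<omega> (butlast y) \<le> enat n"
      using h sy[of y] by simp
  qed
  show ?thesis
    unfolding nerman_def cg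
    by (intro sum.cong refl) (simp add: sy coming_gen_def)
qed

lemma termval:
  assumes fin: "finite (Dset \<omega>0 n)" and y: "y \<in> Yset \<omega>0 n"
  shows "(\<Prod>k<length y. ennreal (hv p \<alpha> (\<omega>0 (take k y)) (y!k))) * (\<Prod>x\<in>Dset \<omega>0 n - Pset y. ennreal (pmf p (\<omega>0 x)))
   = ennreal (if sigma \<omega>0 y \<noteq> \<infinity> then exp (- \<alpha> * real (the_enat (sigma \<omega>0 y))) * (\<Prod>x\<in>Dset \<omega>0 n. pmf p (\<omega>0 x)) else 0)"
proof -
  define D where "D = Dset \<omega>0 n"
  have PD: "Pset y \<subseteq> D" using Y_prefix[OF y] by (auto simp: Pset_def D_def)
  have "(\<Prod>k<length y. ennreal (hv p \<alpha> (\<omega>0 (take k y)) (y!k))) * (\<Prod>x\<in>D - Pset y. ennreal (pmf p (\<omega>0 x)))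
     = ennreal ((\<Prod>k<length y. hv p \<alpha> (\<omega>0 (take k y)) (y!k)) * (\<Prod>x\<in>D - Pset y. pmf p (\<omega>0 x)))"
    by (simp add: prod_ennreal hv_nonneg ennreal_mult prod_nonneg)
  also have "(\<Prod>k<length y. hv p \<alpha> (\<omega>0 (take k y)) (y!k)) * (\<Prod>x\<in>D - Pset y. pmf p (\<omega>0 x))
     = (if sigma \<omega>0 y \<noteq> \<infinity> then exp (- \<alpha> * real (the_enat (sigma \<omega>0 y))) * (\<Prod>x\<in>D. pmf p (\<omega>0 x)) else 0)"
  proof (cases "\<forall>k<length y. 1 \<le> y!k \<and> y!k \<le> length (\<omega>0 (take k y))")
    case False
    then obtain k where k: "k < length y" "\<not> (1 \<le> y!k \<and> y!k \<le> length (\<omega>0 (take k y)))" by auto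
    then have "hv p \<alpha> (\<omega>0 (take k y)) (y!k) = 0" unfolding hv_def by presburger
    then have "(\<Prod>k<length y. hv p \<alpha> (\<omega>0 (take k y)) (y!k)) = 0"
      using k(1) by (intro prod_zero) auto
    moreover have "sigma \<omega>0 y = \<infinity>" using False by (subst sigma_formula) simp
    ultimately show ?thesis by simp
  next
    case True
    define a where "a = (\<lambda>k. \<omega>0 (take k y) ! (y!k - 1))"
    have sig: "sigma \<omega>0 y = enat (\<Sum>k<length y. a k)" using True by (subst sigma_formula) (simp add: a_def)
    have "(\<Prod>k<length y. hv p \<alpha> (\<omega>0 (take k y)) (y!k))
        = (\<Prod>k<length y. exp (- \<alpha> * real (a k)) * pmf p (\<omega>0 (take k y)))"
      using True by (intro prod.cong refl) (simp add: hv_def a_def)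
    also have "\<dots> = (\<Prod>k<length y. exp (- \<alpha> * real (a k))) * (\<Prod>k<length y. pmf p (\<omega>0 (take k y)))"
      by (rule prod.distrib)
    also have "(\<Prod>k<length y. exp (- \<alpha> * real (a k))) = exp (- \<alpha> * real (\<Sum>k<length y. a k))"
      by (simp add: exp_sum[symmetric] sum_distrib_left)
    also have "(\<Prod>k<length y. pmf p (\<omega>0 (take k y))) = (\<Prod>x\<in>Pset y. pmf p (\<omega>0 x))"
    proof -
      have "inj_on (\<lambda>k. take k y) {..<length y}"
      proof (rule inj_onI)
        fix k k' assume "k \<in> {..<length y}" "k' \<in> {..<length y}" "take k y = take k' y"
        then have "length (take k y) = length (take k' y)" "k < length y" "k' < length y" by auto
        then show "k = k'" by simp
      qed
      then show ?thesis unfolding Pset_def by (simp add: prod.reindex)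
    qed
    finally have "(\<Prod>k<length y. hv p \<alpha> (\<omega>0 (take k y)) (y!k)) * (\<Prod>x\<in>D - Pset y. pmf p (\<omega>0 x))
       = exp (- \<alpha> * real (\<Sum>k<length y. a k)) * ((\<Prod>x\<in>D - Pset y. pmf p (\<omega>0 x)) * (\<Prod>x\<in>Pset y. pmf p (\<omega>0 x)))"
      by (simp add: mult_ac)
    also have "(\<Prod>x\<in>D - Pset y. pmf p (\<omega>0 x)) * (\<Prod>x\<in>Pset y. pmf p (\<omega>0 x)) = (\<Prod>x\<in>D. pmf p (\<omega>0 x))"
      using PD fin by (intro prod.subset_diff[symmetric]) (auto simp: D_def)
    finally show ?thesis using sig by (simp add: D_def)
  qed
  finally show ?thesis by (simp add: D_def)
qed

theorem lemma5p1:
  fixes p :: "life pmf" and \<alpha> :: real and n :: nat and t :: "label \<Rightarrow> life option"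
  assumes lives: "\<And>l. l \<in> set_pmf p \<Longrightarrow> sorted l \<and> (\<forall>a\<in>set l. 1 \<le> a)"
    and malthus: "(\<Sum>k. ennreal (exp (- \<alpha> * real (Suc k))) * mean_births p (Suc k)) = 1"
  shows "emeasure (sb_law p \<alpha>) {(S, \<omega>'). stopped (sb_lives S \<omega>') n = t}
       = (\<integral>\<^sup>+ \<omega>. ennreal (nerman \<alpha> \<omega> n) * indicator {\<omega>. stopped \<omega> n = t} \<omega> \<partial>cmj_law p)"
proof -
  define H where "H = hat_law p \<alpha>"
  define HS where "HS = PiM (UNIV :: nat set) (\<lambda>_. H)"
  define P where "P = cmj_law p"
  have probH: "prob_space H" unfolding H_def by (rule prob_space_hat[OF lives malthus]) auto
  have probHS: "prob_space HS" unfolding HS_def using probH by (intro prob_space_PiM) auto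
  have probP: "prob_space P" unfolding P_def cmj_law_def
    by (intro prob_space_PiM) (auto intro: prob_space_measure_pmf)
  interpret P: prob_space P by (rule probP)
  interpret HS: prob_space HS by (rule probHS)
  have sb: "sb_law p \<alpha> = HS \<Otimes>\<^sub>M P" by (simp add: sb_law_def HS_def H_def P_def)
  have spHS: "space HS = UNIV" unfolding HS_def H_def by (rule space_PiM_UNIV) simp
  have spP: "space P = UNIV" unfolding P_def cmj_law_def by (rule space_PiM_UNIV) simp
  show ?thesis
  proof (cases "\<exists>\<omega>0. stopped \<omega>0 n = t")
    case False
    then have e1: "{(S, \<omega>'). stopped (sb_lives S \<omega>') n = t} = {}" by auto
    have e2: "{\<omega>. stopped \<omega> n = t} = {}" using False by auto
    show ?thesis unfolding e1 e2 by simp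
  next
    case True
    then obtain \<omega>0 where t: "t = stopped \<omega>0 n" by auto
    define D where "D = Dset \<omega>0 n"
    have Eeq: "\<And>\<omega>. stopped \<omega> n = t \<longleftrightarrow> (\<forall>x\<in>D. \<omega> x = \<omega>0 x)"
      unfolding t D_def Dset_def using stopped_iff by blast
    have L1: "{(S, \<omega>'). stopped (sb_lives S \<omega>') n = t} = {(S, \<omega>'). \<forall>x\<in>D. sb_lives S \<omega>' x = \<omega>0 x}"
      using Eeq by auto
    have E1: "{\<omega>. stopped \<omega> n = t} = {\<omega>. \<forall>x\<in>D. \<omega> x = \<omega>0 x}" using Eeq by auto
    show ?thesis
    proof (cases "\<forall>x\<in>D. \<omega>0 x \<in> set_pmf p")
      case False
      then obtain x0 where x0: "x0 \<in> D" "\<omega>0 x0 \<notin> set_pmf p" by auto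
      define L where "L = \<omega>0 x0"
      have pL: "pmf p L = 0" using x0 by (simp add: L_def set_pmf_iff)
      define N1 where "N1 = prod_emb UNIV (\<lambda>_::nat. H) {length x0} (Pi\<^sub>E {length x0} (\<lambda>_. {L} \<times> UNIV))"
      define N2 where "N2 = prod_emb UNIV (\<lambda>_::label. measure_pmf p) {x0} (Pi\<^sub>E {x0} (\<lambda>_. {L}))"
      have N1e: "N1 = {S. fst (S (length x0)) = L}"
        unfolding N1_def H_def by (subst prod_emb_UNIV) (auto simp: mem_Times_iff)
      have N2e: "N2 = {\<omega>. \<omega> x0 = L}"
        unfolding N2_def by (subst prod_emb_UNIV) auto
      have N1s: "N1 \<in> sets HS" unfolding N1_def HS_def by (intro sets_PiM_I) (auto simp: H_def)
      have N2s: "N2 \<in> sets P" unfolding N2_def P_def cmj_law_def by (intro sets_PiM_I) auto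
      have mN1: "emeasure HS N1 = 0"
        unfolding N1_def HS_def using probH
        by (subst emeasure_PiM_emb) (auto simp: H_def hat_null[OF pL])
      have mN2: "emeasure P N2 = 0"
        unfolding N2_def P_def cmj_law_def
        by (subst emeasure_PiM_emb) (auto simp: prob_space_measure_pmf emeasure_pmf_single pL)
      have s1: "N1 \<times> UNIV \<in> sets (HS \<Otimes>\<^sub>M P)" using N1s spP by (metis pair_measureI sets.top)
      have s2: "UNIV \<times> N2 \<in> sets (HS \<Otimes>\<^sub>M P)" using N2s spHS by (metis pair_measureI sets.top)
      have m1: "emeasure (HS \<Otimes>\<^sub>M P) (N1 \<times> UNIV) = 0"
        using P.emeasure_pair_measure_Times[OF N1s, of UNIV] mN1 spP by (metis sets.top mult_zero_left)
      have m2: "emeasure (HS \<Otimes>\<^sub>M P) (UNIV \<times> N2) = 0"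
        using P.emeasure_pair_measure_Times[OF _ N2s, of UNIV] mN2 spHS by (metis sets.top mult_zero_right)
      have sub: "{(S, \<omega>'). \<forall>x\<in>D. sb_lives S \<omega>' x = \<omega>0 x} \<subseteq> N1 \<times> UNIV \<union> UNIV \<times> N2"
      proof
        fix z assume "z \<in> {(S, \<omega>'). \<forall>x\<in>D. sb_lives S \<omega>' x = \<omega>0 x}"
        then obtain S \<omega>' where z: "z = (S, \<omega>')" and "sb_lives S \<omega>' x0 = L"
          using x0 by (auto simp: L_def)
        then show "z \<in> N1 \<times> UNIV \<union> UNIV \<times> N2"
          by (auto simp: N1e N2e sb_lives_def split: if_splits)
      qed
      have "emeasure (HS \<Otimes>\<^sub>M P) {(S, \<omega>'). \<forall>x\<in>D. sb_lives S \<omega>' x = \<omega>0 x}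
          \<le> emeasure (HS \<Otimes>\<^sub>M P) (N1 \<times> UNIV \<union> UNIV \<times> N2)"
        using sub s1 s2 by (intro emeasure_mono) auto
      also have "\<dots> \<le> emeasure (HS \<Otimes>\<^sub>M P) (N1 \<times> UNIV) + emeasure (HS \<Otimes>\<^sub>M P) (UNIV \<times> N2)"
        using s1 s2 by (rule emeasure_subadditive)
      finally have lhs0: "emeasure (sb_law p \<alpha>) {(S, \<omega>'). stopped (sb_lives S \<omega>') n = t} = 0"
        unfolding sb L1 using m1 m2 by simp
      have "AE \<omega> in P. \<omega> \<notin> N2"
        using N2s mN2 by (intro AE_I'[of N2]) auto
      then have "(\<integral>\<^sup>+ \<omega>. ennreal (nerman \<alpha> \<omega> n) * indicator {\<omega>. stopped \<omega> n = t} \<omega> \<partial>P) = (\<integral>\<^sup>+ \<omega>. 0 \<partial>P)"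
        by (rule nn_integral_cong_AE[OF AE_mp]) (auto simp: E1 N2e L_def x0 indicator_def)
      then show ?thesis using lhs0 by (simp add: P_def)
    next
      case True
      note T2 = True
      have finD: "finite D" unfolding D_def Dset_def
        by (rule finite_D) (use T2 lives in \<open>auto simp: D_def Dset_def\<close>)
      define Y where "Y = Yset \<omega>0 n"
      define C where "C = coming_gen \<omega>0 n"
      define e where "e = (\<lambda>y. exp (- \<alpha> * real (the_enat (sigma \<omega>0 y))))"
      define Q where "Q = (\<Prod>x\<in>D. pmf p (\<omega>0 x))"
      have Qnn: "0 \<le> Q" unfolding Q_def by (intro prod_nonneg) auto
      have CY: "C \<subseteq> Y"
        unfolding C_def Y_def Yset_def coming_gen_def Dset_def by auto
      have YC: "\<And>y. y \<in> Y \<Longrightarrow> (sigma \<omega>0 y \<noteq> \<infinity> \<longleftrightarrow> y \<in> C)"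
        unfolding C_def Y_def Yset_def coming_gen_def Dset_def by auto
      have finC: "finite C"
      proof (rule finite_subset)
        show "C \<subseteq> (\<Union>z\<in>D. (\<lambda>i. z @ [i]) ` {1..length (\<omega>0 z)})"
        proof
          fix y assume y: "y \<in> C"
          then have yne: "y \<noteq> []" and sf: "sigma \<omega>0 y \<noteq> \<infinity>" and bD: "butlast y \<in> D"
            by (auto simp: C_def coming_gen_def D_def Dset_def)
          have yy: "y = butlast y @ [last y]" using yne by simp
          have "tau (\<omega>0 (butlast y)) (last y) \<noteq> \<infinity>"
          proof
            assume "tau (\<omega>0 (butlast y)) (last y) = \<infinity>"
            then have "sigma \<omega>0 (butlast y @ [last y]) = \<infinity>" by (simp add: sigma_snoc)
            then show False using sf yy by simp
          qed
          then have "1 \<le> last y \<and> last y \<le> length (\<omega>0 (butlast y))"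
            by (auto simp: tau_def split: if_splits)
          then show "y \<in> (\<Union>z\<in>D. (\<lambda>i. z @ [i]) ` {1..length (\<omega>0 z)})"
            using bD yy by (intro UN_I[of "butlast y"]) auto
        qed
      qed (use finD in auto)
      have Aeq: "\<And>y. Aset \<omega>0 y = prod_emb UNIV (\<lambda>_::nat. H) {..<length y} (Pi\<^sub>E {..<length y} (\<lambda>k. {(\<omega>0 (take k y), y!k)}))"
        unfolding H_def by (subst prod_emb_UNIV) (auto simp: Aset_def)
      have Beq: "\<And>y. Bset \<omega>0 n y = prod_emb UNIV (\<lambda>_::label. measure_pmf p) (D - Pset y) (Pi\<^sub>E (D - Pset y) (\<lambda>x. {\<omega>0 x}))"
        by (subst prod_emb_UNIV) (auto simp: Bset_def D_def)
      have Eeq2: "{\<omega>. stopped \<omega> n = t} = prod_emb UNIV (\<lambda>_::label. measure_pmf p) D (Pi\<^sub>E D (\<lambda>x. {\<omega>0 x}))"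
        unfolding E1 by (subst prod_emb_UNIV) auto
      have As: "\<And>y. Aset \<omega>0 y \<in> sets HS"
        unfolding Aeq HS_def by (intro sets_PiM_I) (auto simp: H_def)
      have Bs: "\<And>y. Bset \<omega>0 n y \<in> sets P"
        unfolding Beq P_def cmj_law_def using finD by (intro sets_PiM_I) auto
      have Es: "{\<omega>. stopped \<omega> n = t} \<in> sets P"
        unfolding Eeq2 P_def cmj_law_def using finD by (intro sets_PiM_I) auto
      have mA: "\<And>y. emeasure HS (Aset \<omega>0 y) = (\<Prod>k<length y. ennreal (hv p \<alpha> (\<omega>0 (take k y)) (y!k)))"
        unfolding Aeq HS_def using probH
        by (subst emeasure_PiM_emb) (auto simp: H_def hat_single)
      have mB: "\<And>y. emeasure P (Bset \<omega>0 n y) = (\<Prod>x\<in>D - Pset y. ennreal (pmf p (\<omega>0 x)))"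
        unfolding Beq P_def cmj_law_def using finD
        by (subst emeasure_PiM_emb) (auto simp: prob_space_measure_pmf emeasure_pmf_single)
      have mE: "emeasure P {\<omega>. stopped \<omega> n = t} = ennreal Q"
        unfolding Eeq2 P_def cmj_law_def Q_def using finD
        by (subst emeasure_PiM_emb) (auto simp: prob_space_measure_pmf emeasure_pmf_single prod_ennreal)
      have "emeasure (sb_law p \<alpha>) {(S, \<omega>'). stopped (sb_lives S \<omega>') n = t}
          = emeasure (HS \<Otimes>\<^sub>M P) (\<Union>y\<in>Y. Aset \<omega>0 y \<times> Bset \<omega>0 n y)"
        unfolding sb L1 D_def Y_def using decomp[of \<omega>0 n] finD by (simp add: D_def)
      also have "\<dots> = (\<integral>\<^sup>+ y. emeasure (HS \<Otimes>\<^sub>M P) (Aset \<omega>0 y \<times> Bset \<omega>0 n y) \<partial>count_space Y)"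
        unfolding Y_def
        by (rule emeasure_UN_countable) (auto intro: pair_measureI As Bs decomp_disj)
      also have "\<dots> = (\<integral>\<^sup>+ y. ennreal (if y \<in> C then e y * Q else 0) \<partial>count_space Y)"
      proof (intro nn_integral_cong)
        fix y assume "y \<in> space (count_space Y)"
        then have y: "y \<in> Y" by simp
        have "emeasure (HS \<Otimes>\<^sub>M P) (Aset \<omega>0 y \<times> Bset \<omega>0 n y)
            = (\<Prod>k<length y. ennreal (hv p \<alpha> (\<omega>0 (take k y)) (y!k))) * (\<Prod>x\<in>D - Pset y. ennreal (pmf p (\<omega>0 x)))"
          by (simp add: P.emeasure_pair_measure_Times[OF As Bs] mA mB)
        also have "\<dots> = ennreal (if sigma \<omega>0 y \<noteq> \<infinity> then e y * Q else 0)"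
          unfolding D_def e_def Q_def using termval[of \<omega>0 n y p \<alpha>] finD y by (simp add: D_def Y_def)
        finally show "emeasure (HS \<Otimes>\<^sub>M P) (Aset \<omega>0 y \<times> Bset \<omega>0 n y) = ennreal (if y \<in> C then e y * Q else 0)"
          using YC[OF y] by simp
      qed
      also have "\<dots> = (\<integral>\<^sup>+ y. ennreal (e y * Q) * indicator C y \<partial>count_space UNIV)"
        by (subst nn_integral_count_space_indicator, simp)
           (use CY in \<open>auto intro!: nn_integral_cong simp: indicator_def\<close>)
      also have "\<dots> = (\<Sum>y\<in>C. ennreal (e y * Q))"
        using finC by (subst nn_integral_indicator_finite) auto
      also have "\<dots> = ennreal (nerman \<alpha> \<omega>0 n) * ennreal Q"
        unfolding nerman_def C_def e_def
        by (subst sum_ennreal) (auto simp: Qnn sum_distrib_right[symmetric] ennreal_mult sum_nonneg)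
      finally have lhs: "emeasure (sb_law p \<alpha>) {(S, \<omega>'). stopped (sb_lives S \<omega>') n = t}
          = ennreal (nerman \<alpha> \<omega>0 n) * ennreal Q" .
      have "(\<integral>\<^sup>+ \<omega>. ennreal (nerman \<alpha> \<omega> n) * indicator {\<omega>. stopped \<omega> n = t} \<omega> \<partial>P)
          = (\<integral>\<^sup>+ \<omega>. ennreal (nerman \<alpha> \<omega>0 n) * indicator {\<omega>. stopped \<omega> n = t} \<omega> \<partial>P)"
      proof (intro nn_integral_cong)
        fix \<omega> show "ennreal (nerman \<alpha> \<omega> n) * indicator {\<omega>. stopped \<omega> n = t} \<omega>
            = ennreal (nerman \<alpha> \<omega>0 n) * indicator {\<omega>. stopped \<omega> n = t} \<omega>"
        proof (cases "stopped \<omega> n = t")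
          case True
          then have "nerman \<alpha> \<omega> n = nerman \<alpha> \<omega>0 n"
            using Eeq by (intro nerman_eq) (auto simp: D_def Dset_def)
          then show ?thesis by simp
        qed simp
      qed
      also have "\<dots> = ennreal (nerman \<alpha> \<omega>0 n) * ennreal Q"
        using Es mE by (simp add: nn_integral_cmult_indicator)
      finally show ?thesis using lhs by (simp add: P_def)
    qed
  qed
qed

end
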